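(* Let $G=(V,E)$ be an undirected graph with edge weights $w:E\to[0,1]$, node demands $x:V\to[0,1]$, and distinct node lengths $d(v)$, such that \[\forall u\in V:\quad x(u)+\sum_{\{v\in V:d(v)>d(u)\}}w(v,u)\,x(v)\le1.\] Then for every positive integer $T$ there is a multi-coloring $\pi:V\to2^{\{0,\dots,T-1\}}$ such that (1) for every $c\in\{0,\dots,T-1\}$ and every $u\in\pi^{-1}(c)$: $\sum_{\{v\in\pi^{-1}(c):d(v)>d(u)\}}w(v,u)\le1$; (2) for every $u\in V$: $|\pi(u)|\ge\lfloor x(u)\cdot T\rfloor$.
   Context: $\pi^{-1}(c)=\{v\in V: c\in\pi(v)\}$. For $u,v\in V$, $w(v,u)$ denotes the weight of the edge $\{u,v\}$ (taken to be $0$ if $\{u,v\}\notin E$). *)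

theory Defs
  imports Main Complex_Main
begin

definition undirected_graph :: "'v set \<Rightarrow> 'v set set \<Rightarrow> bool" where
  "undirected_graph V E \<longleftrightarrow> finite V \<and> (\<forall>e\<in>E. \<exists>u v. u \<in> V \<and> v \<in> V \<and> u \<noteq> v \<and> e = {u, v})"

definition wt :: "'v set set \<Rightarrow> ('v set \<Rightarrow> real) \<Rightarrow> 'v \<Rightarrow> 'v \<Rightarrow> real" where
  "wt E w v u = (if {u, v} \<in> E then w {u, v} else 0)"

definition color_class :: "('v \<Rightarrow> nat set) \<Rightarrow> 'v set \<Rightarrow> nat \<Rightarrow> 'v set" where
  "color_class \<pi> V c = {v \<in> V. c \<in> \<pi> v}"

end

theory Submission
  imports Defs
begin

lemma wt_nonneg:
  assumes "\<forall>e\<in>E. 0 \<le> w e \<and> w e \<le> 1"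
  shows "0 \<le> wt E w v u"
  using assms unfolding wt_def by auto

lemma main:
  fixes V :: "'v set" and E :: "'v set set" and w :: "'v set \<Rightarrow> real"
    and x :: "'v \<Rightarrow> real" and d :: "'v \<Rightarrow> real" and T :: nat
  assumes W: "\<forall>e\<in>E. 0 \<le> w e \<and> w e \<le> 1"
    and X: "\<forall>v\<in>V. 0 \<le> x v \<and> x v \<le> 1"
    and inj: "inj_on d V"
    and H: "\<forall>u\<in>V. x u + (\<Sum>v\<in>{v\<in>V. d v > d u}. wt E w v u * x v) \<le> 1"
    and fV: "finite V"
    and fS: "finite S"
  shows "S \<subseteq> V \<longrightarrow> (\<exists>\<pi>. (\<forall>v. \<pi> v \<subseteq> {..<T}) \<and> (\<forall>v. v \<notin> S \<longrightarrow> \<pi> v = {})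
     \<and> (\<forall>v\<in>S. card (\<pi> v) = nat \<lfloor>x v * real T\<rfloor>)
     \<and> (\<forall>c. \<forall>u\<in>S. c \<in> \<pi> u \<longrightarrow> (\<Sum>v\<in>{v\<in>S. c \<in> \<pi> v \<and> d v > d u}. wt E w v u) \<le> 1))"
  using fS
proof (induction S rule: finite_ranking_induct[where f="\<lambda>v. - d v"])
  case empty
  show ?case by (intro impI exI[of _ "\<lambda>_. {}"]) auto
next
  case (insert u S)
  show ?case
  proof
    assume sub: "insert u S \<subseteq> V"
    show "\<exists>\<pi>. (\<forall>v. \<pi> v \<subseteq> {..<T}) \<and> (\<forall>v. v \<notin> insert u S \<longrightarrow> \<pi> v = {})
     \<and> (\<forall>v\<in>insert u S. card (\<pi> v) = nat \<lfloor>x v * real T\<rfloor>)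
     \<and> (\<forall>c. \<forall>u'\<in>insert u S. c \<in> \<pi> u' \<longrightarrow> (\<Sum>v\<in>{v\<in>insert u S. c \<in> \<pi> v \<and> d v > d u'}. wt E w v u') \<le> 1)"
    proof (cases "u \<in> S")
      case True
      then show ?thesis using insert sub by (simp add: insert_absorb)
    next
      case False
      obtain \<pi>' where P1: "\<forall>v. \<pi>' v \<subseteq> {..<T}" and P2: "\<forall>v. v \<notin> S \<longrightarrow> \<pi>' v = {}"
        and P3: "\<forall>v\<in>S. card (\<pi>' v) = nat \<lfloor>x v * real T\<rfloor>"
        and P4: "\<forall>c. \<forall>u\<in>S. c \<in> \<pi>' u \<longrightarrow> (\<Sum>v\<in>{v\<in>S. c \<in> \<pi>' v \<and> d v > d u}. wt E w v u) \<le> 1"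
        using insert sub by auto
      have uV: "u \<in> V" using sub by auto
      have gt: "\<forall>v\<in>S. d v > d u"
      proof
        fix v assume v: "v \<in> S"
        have "d v \<ge> d u" using insert(2)[OF v] by simp
        moreover have "d v \<noteq> d u" using inj v sub False by (metis inj_on_def insert_subset subsetD)
        ultimately show "d v > d u" by simp
      qed
      define load where "load c = (\<Sum>v\<in>{v\<in>S. c \<in> \<pi>' v}. wt E w v u)" for c
      have load_nn: "load c \<ge> 0" for c unfolding load_def using wt_nonneg[OF W] by (simp add: sum_nonneg)
      have kle: "real (nat \<lfloor>x v * real T\<rfloor>) \<le> x v * real T" if "v \<in> V" for v
      proof -
        have "0 \<le> x v * real T" using X that by simp
        then show ?thesis by linarith
      qed
      have step1: "(\<Sum>c\<in>{..<T}. load c) = (\<Sum>v\<in>S. wt E w v u * real (card (\<pi>' v)))"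
      proof -
        have "(\<Sum>c\<in>{..<T}. load c) = (\<Sum>c\<in>{..<T}. \<Sum>v\<in>S. if c \<in> \<pi>' v then wt E w v u else 0)"
          unfolding load_def using insert(1) by (simp add: sum.inter_filter)
        also have "\<dots> = (\<Sum>v\<in>S. \<Sum>c\<in>{..<T}. if c \<in> \<pi>' v then wt E w v u else 0)"
          by (rule sum.swap)
        also have "\<dots> = (\<Sum>v\<in>S. wt E w v u * real (card (\<pi>' v)))"
        proof (rule sum.cong[OF refl])
          fix v assume "v \<in> S"
          have e: "{c\<in>{..<T}. c \<in> \<pi>' v} = \<pi>' v" using P1 by auto
          have "(\<Sum>c\<in>{..<T}. if c \<in> \<pi>' v then wt E w v u else 0) = (\<Sum>c\<in>{c\<in>{..<T}. c \<in> \<pi>' v}. wt E w v u)"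
            by (simp only: sum.inter_filter[OF finite_lessThan])
          also have "\<dots> = wt E w v u * real (card (\<pi>' v))" unfolding e by simp
          finally show "(\<Sum>c\<in>{..<T}. if c \<in> \<pi>' v then wt E w v u else 0) = wt E w v u * real (card (\<pi>' v))" .
        qed
        finally show ?thesis .
      qed
      have step2: "(\<Sum>v\<in>S. wt E w v u * real (card (\<pi>' v))) \<le> real T * (1 - x u)"
      proof -
        have "(\<Sum>v\<in>S. wt E w v u * real (card (\<pi>' v))) \<le> (\<Sum>v\<in>S. wt E w v u * x v * real T)"
        proof (rule sum_mono)
          fix v assume v: "v \<in> S"
          have "real (card (\<pi>' v)) \<le> x v * real T" using P3 v kle sub by auto
          then show "wt E w v u * real (card (\<pi>' v)) \<le> wt E w v u * x v * real T"
            using wt_nonneg[OF W] by (metis mult.assoc mult_left_mono)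
        qed
        also have "\<dots> \<le> (\<Sum>v\<in>{v\<in>V. d v > d u}. wt E w v u * x v * real T)"
          apply (rule sum_mono2)
          using fV sub gt wt_nonneg[OF W] X by auto
        also have "\<dots> = real T * (\<Sum>v\<in>{v\<in>V. d v > d u}. wt E w v u * x v)"
          by (simp add: sum_distrib_left mult.commute mult.left_commute)
        also have "\<dots> \<le> real T * (1 - x u)"
          using H uV by (intro mult_left_mono) auto
        finally show ?thesis .
      qed
      define bad where "bad = {c\<in>{..<T}. load c > 1}"
      define k where "k = nat \<lfloor>x u * real T\<rfloor>"
      have fbad: "finite bad" unfolding bad_def by simp
      have "real (card bad) = (\<Sum>c\<in>bad. 1)" by simp
      also have "\<dots> \<le> (\<Sum>c\<in>bad. load c)" by (rule sum_mono) (auto simp: bad_def)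
      also have "\<dots> \<le> (\<Sum>c\<in>{..<T}. load c)"
        by (rule sum_mono2) (auto simp: bad_def load_nn)
      finally have "real (card bad) \<le> real T * (1 - x u)" using step1 step2 by linarith
      moreover have "real k \<le> x u * real T" unfolding k_def using kle uV by blast
      ultimately have "real (card bad) + real k \<le> real T" by (simp add: algebra_simps)
      hence ck: "card bad + k \<le> T" by linarith
      define good where "good = {..<T} - bad"
      have "card good = T - card bad" unfolding good_def
        by (subst card_Diff_subset) (auto simp: bad_def)
      hence "k \<le> card good" using ck by simp
      then obtain C where C1: "C \<subseteq> good" and C2: "card C = k" by (metis obtain_subset_with_card_n)
      define \<pi> where "\<pi> = \<pi>'(u := C)"
      show ?thesis
      proof (intro exI[of _ \<pi>] conjI ballI allI impI)
        fix v show "\<pi> v \<subseteq> {..<T}" using P1 C1 unfolding \<pi>_def good_def by auto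
      next
        fix v assume "v \<notin> insert u S" then show "\<pi> v = {}" using P2 unfolding \<pi>_def by auto
      next
        fix v assume "v \<in> insert u S" then show "card (\<pi> v) = nat \<lfloor>x v * real T\<rfloor>"
          using P3 C2 False unfolding \<pi>_def k_def by auto
      next
        fix c u' assume u': "u' \<in> insert u S" and c: "c \<in> \<pi> u'"
        show "(\<Sum>v\<in>{v\<in>insert u S. c \<in> \<pi> v \<and> d v > d u'}. wt E w v u') \<le> 1"
        proof (cases "u' = u")
          case True
          have e: "{v\<in>insert u S. c \<in> \<pi> v \<and> d v > d u'} = {v\<in>S. c \<in> \<pi>' v}"
            using True gt False unfolding \<pi>_def by auto
          have "c \<in> good" using c C1 True unfolding \<pi>_def by auto
          hence "load c \<le> 1" unfolding good_def bad_def by auto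
          then show ?thesis using e True unfolding load_def by simp
        next
          case ne: False
          hence u'S: "u' \<in> S" using u' by auto
          have e: "{v\<in>insert u S. c \<in> \<pi> v \<and> d v > d u'} = {v\<in>S. c \<in> \<pi>' v \<and> d v > d u'}"
            using ne gt u'S False unfolding \<pi>_def by auto
          have "c \<in> \<pi>' u'" using c ne unfolding \<pi>_def by auto
          then show ?thesis unfolding e using P4 u'S by blast
        qed
      qed
    qed
  qed
qed

theorem lemma5:
  fixes V :: "'v set" and E :: "'v set set" and w :: "'v set \<Rightarrow> real"
    and x :: "'v \<Rightarrow> real" and d :: "'v \<Rightarrow> real" and T :: nat
  assumes "undirected_graph V E"
    and "\<forall>e\<in>E. 0 \<le> w e \<and> w e \<le> 1"
    and "\<forall>v\<in>V. 0 \<le> x v \<and> x v \<le> 1"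
    and "inj_on d V"
    and "\<forall>u\<in>V. x u + (\<Sum>v\<in>{v\<in>V. d v > d u}. wt E w v u * x v) \<le> 1"
    and "T > 0"
  shows "\<exists>\<pi> :: 'v \<Rightarrow> nat set. (\<forall>v\<in>V. \<pi> v \<subseteq> {0..<T})
     \<and> (\<forall>c\<in>{0..<T}. \<forall>u\<in>color_class \<pi> V c.
           (\<Sum>v\<in>{v\<in>color_class \<pi> V c. d v > d u}. wt E w v u) \<le> 1)
     \<and> (\<forall>u\<in>V. real (card (\<pi> u)) \<ge> of_int \<lfloor>x u * real T\<rfloor>)"
proof -
  have fV: "finite V" using assms(1) unfolding undirected_graph_def by auto
  obtain \<pi> where P1: "\<forall>v. \<pi> v \<subseteq> {..<T}"
     and P3: "\<forall>v\<in>V. card (\<pi> v) = nat \<lfloor>x v * real T\<rfloor>"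
     and P4: "\<forall>c. \<forall>u\<in>V. c \<in> \<pi> u \<longrightarrow> (\<Sum>v\<in>{v\<in>V. c \<in> \<pi> v \<and> d v > d u}. wt E w v u) \<le> 1"
    using main[OF assms(2,3,4,5) fV fV, of T] by auto
  show ?thesis
  proof (intro exI[of _ \<pi>] conjI ballI)
    fix v assume "v \<in> V" then show "\<pi> v \<subseteq> {0..<T}" using P1 by (simp add: atLeast0LessThan)
  next
    fix c u assume "c \<in> {0..<T}" "u \<in> color_class \<pi> V c"
    moreover have "{v\<in>color_class \<pi> V c. d v > d u} = {v\<in>V. c \<in> \<pi> v \<and> d v > d u}"
      unfolding color_class_def by auto
    ultimately show "(\<Sum>v\<in>{v\<in>color_class \<pi> V c. d v > d u}. wt E w v u) \<le> 1"
      using P4 unfolding color_class_def by auto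
  next
    fix u assume "u \<in> V" then show "real (card (\<pi> u)) \<ge> of_int \<lfloor>x u * real T\<rfloor>"
      using P3 by auto
  qed
qed

end
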